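(* Let $A_1\in N_p$ and $A_2\in N_q$ be Belitskii canonical forms (under $B_p$- and $B_q$-similarity respectively), with $A_1\in Q_1U_p$ and $A_2\in Q_2U_q$ for subpermutations $Q_1\in N_p$ and $Q_2\in N_q$. If $Q_{12}\in M_{p,q}(\mathbb F)$ is such that $\begin{pmatrix}Q_1&Q_{12}\\0&Q_2\end{pmatrix}$ is a subpermutation, then $\begin{pmatrix}A_1&Q_{12}\\0&A_2\end{pmatrix}$ is a Belitskii canonical form in $N_{p+q}$ (under $B_{p+q}$-similarity).
   Context: $\mathbb F$ is a field. For each $m$, $B_m$ (resp. $U_m$, $N_m$) denotes the set of $m\times m$ invertible upper triangular (resp. upper triangular with all diagonal entries $1$, strictly upper triangular) matrices over $\mathbb F$; $M_{p,q}(\mathbb F)$ is the set of $p\times q$ matrices; $QU_m=\{QU:U\in U_m\}$. A subpermutation is a matrix each of whose rows and columns has at most one nonzero entry, and that entry equals $1$. Matrices $A,C$ are $G$-similar if $C=BAB^{-1}$ for some $B\in G$. Belitskii order on positions $\{(i,j):1\le i<j\le m\}$: $(i,j)\prec(i',j')$ iff $i>i'$, or $i=i'$ and $j<j'$ (so $(m-1,m)\prec(m-2,m-1)\prec(m-2,m)\prec\cdots\prec(1,m)$). Belitskii's algorithm for $B_m$-similarity on $N_m$: given $A\in N_m$ put $A^{(0)}=A$, $G^{(0)}=B_m$. For $k=0,1,\dots$, let $(p',q')$ be the $(k+1)$th position in Belitskii order and look at the $(p',q')$ entries of all matrices $G^{(k)}$-similar to $A^{(k)}$: (a) if this entry is always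 $0$ or can take every value of $\mathbb F$, choose $A^{(k+1)}$ $G^{(k)}$-similar to $A^{(k)}$ with that entry $0$; (b) if it takes exactly the values of $\mathbb F\setminus\{0\}$, choose $A^{(k+1)}$ with that entry $1$; (c) otherwise it is a constant $\lambda\neq 0$ and $A^{(k+1)}=A^{(k)}$. $G^{(k+1)}$ is the subgroup of $g\in G^{(k)}$ such that $gA^{(k+1)}g^{-1}$ agrees with $A^{(k+1)}$ in the first $k+1$ positions. The final matrix is the Belitskii canonical form of $A$; a matrix is a Belitskii canonical form if it is the Belitskii canonical form of some matrix. *)

theory Defs
  imports "Jordan_Normal_Form.Matrix"
begin

text \<open>Matrices are Jordan_Normal_Form matrices; indices are 0-based, so the
  paper's position (i,j) (1-based) corresponds to (i-1,j-1) here.\<close>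

definition Nm :: "nat \<Rightarrow> 'a::field mat set" where
  "Nm m = {A \<in> carrier_mat m m. \<forall>i<m. \<forall>j<m. j \<le> i \<longrightarrow> A $$ (i,j) = 0}"

definition Bm :: "nat \<Rightarrow> 'a::field mat set" where
  "Bm m = {B \<in> carrier_mat m m. upper_triangular B \<and> invertible_mat B}"

definition Um :: "nat \<Rightarrow> 'a::field mat set" where
  "Um m = {U \<in> carrier_mat m m. upper_triangular U \<and> (\<forall>i<m. U $$ (i,i) = 1)}"

definition QU :: "nat \<Rightarrow> 'a::field mat \<Rightarrow> 'a mat set" where
  "QU m Q = {Q * U | U. U \<in> Um m}"

definition subperm :: "'a::field mat \<Rightarrow> bool" where
  "subperm A \<longleftrightarrow>
     (\<forall>i<dim_row A. \<forall>j<dim_col A. A $$ (i,j) = 0 \<or> A $$ (i,j) = 1) \<and>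
     (\<forall>i<dim_row A. \<forall>j<dim_col A. \<forall>j'<dim_col A.
        A $$ (i,j) \<noteq> 0 \<longrightarrow> A $$ (i,j') \<noteq> 0 \<longrightarrow> j = j') \<and>
     (\<forall>j<dim_col A. \<forall>i<dim_row A. \<forall>i'<dim_row A.
        A $$ (i,j) \<noteq> 0 \<longrightarrow> A $$ (i',j) \<noteq> 0 \<longrightarrow> i = i')"

definition conj_by :: "nat \<Rightarrow> 'a::field mat \<Rightarrow> 'a mat \<Rightarrow> 'a mat \<Rightarrow> bool" where
  "conj_by m g A C \<longleftrightarrow> (\<exists>h \<in> carrier_mat m m.
      g * h = 1\<^sub>m m \<and> h * g = 1\<^sub>m m \<and> C = g * A * h)"

definition G_similar :: "nat \<Rightarrow> 'a::field mat set \<Rightarrow> 'a mat \<Rightarrow> 'a mat \<Rightarrow> bool" where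
  "G_similar m G A C \<longleftrightarrow> (\<exists>g \<in> G. conj_by m g A C)"

definition belitskii_positions :: "nat \<Rightarrow> (nat \<times> nat) list" where
  "belitskii_positions m = concat (map (\<lambda>i. map (\<lambda>j. (i,j)) [Suc i..<m]) (rev [0..<m]))"

definition orbit_entries :: "nat \<Rightarrow> 'a::field mat set \<Rightarrow> 'a mat \<Rightarrow> nat \<times> nat \<Rightarrow> 'a set" where
  "orbit_entries m G A pos = {C $$ pos | C. G_similar m G A C}"

definition belitskii_step ::
  "nat \<Rightarrow> nat \<Rightarrow> 'a::field mat \<Rightarrow> 'a mat set \<Rightarrow> 'a mat \<Rightarrow> 'a mat set \<Rightarrow> bool" where
  "belitskii_step m k A G A' G' \<longleftrightarrow>
     (let ps = belitskii_positions m; pos = ps ! k; S = orbit_entries m G A pos in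
       (if S = {0} \<or> S = UNIV then G_similar m G A A' \<and> A' $$ pos = 0
        else if S = UNIV - {0} then G_similar m G A A' \<and> A' $$ pos = 1
        else A' = A) \<and>
       G' = {g \<in> G. \<exists>C. conj_by m g A' C \<and> (\<forall>t\<le>k. C $$ (ps ! t) = A' $$ (ps ! t))})"

definition belitskii_cf_of :: "nat \<Rightarrow> 'a::field mat \<Rightarrow> 'a mat \<Rightarrow> bool" where
  "belitskii_cf_of m A C \<longleftrightarrow>
     (\<exists>As Gs. As 0 = A \<and> Gs 0 = Bm m \<and>
        (\<forall>k < length (belitskii_positions m).
           belitskii_step m k (As k) (Gs k) (As (Suc k)) (Gs (Suc k))) \<and>
        C = As (length (belitskii_positions m)))"

definition belitskii_cf :: "nat \<Rightarrow> 'a::field mat \<Rightarrow> bool" where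
  "belitskii_cf m C \<longleftrightarrow> (\<exists>A \<in> Nm m. belitskii_cf_of m A C)"

end

theory Submission
  imports Defs "Jordan_Normal_Form.Determinant"
begin

lemma sum_single:
  assumes "finite A" "x \<in> A" "\<And>y. y \<in> A \<Longrightarrow> y \<noteq> x \<Longrightarrow> f y = 0"
  shows "sum f A = f x"
proof -
  have "sum f A = f x + sum f (A - {x})" using sum.remove[OF assms(1,2)] .
  also have "sum f (A - {x}) = 0" using assms(3) by (intro sum.neutral) auto
  finally show ?thesis by simp
qed

lemma mult_entry:
  assumes "A \<in> carrier_mat n k" "B \<in> carrier_mat k m" "i < n" "j < m"
  shows "(A * B) $$ (i,j) = (\<Sum>l<k. A $$ (i,l) * B $$ (l,j))"
  using assms by (auto simp: scalar_prod_def atLeast0LessThan intro!: sum.cong)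

lemma Bm_carrier: "g \<in> Bm m \<Longrightarrow> g \<in> carrier_mat m m"
  by (simp add: Bm_def)

lemma Bm_ut: "g \<in> Bm m \<Longrightarrow> upper_triangular g"
  by (simp add: Bm_def)

lemma Bm_inv:
  assumes "g \<in> Bm m"
  obtains h where "h \<in> carrier_mat m m" "g * h = 1\<^sub>m m" "h * g = 1\<^sub>m m"
proof -
  have g: "g \<in> carrier_mat m m" and inv: "invertible_mat g" using assms by (auto simp: Bm_def)
  then obtain B where B: "g * B = 1\<^sub>m m" "B * g = 1\<^sub>m (dim_row B)"
    unfolding invertible_mat_def inverts_mat_def by auto
  have "dim_col B = m" using arg_cong[OF B(1), of dim_col] by simp
  moreover have "dim_row B = m" using arg_cong[OF B(2), of dim_col] g by simp
  ultimately show ?thesis using that B by auto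
qed

lemma Bm_diag:
  assumes "g \<in> Bm m" "i < m"
  shows "g $$ (i,i) \<noteq> 0"
proof -
  obtain h where h: "h \<in> carrier_mat m m" "g * h = 1\<^sub>m m" "h * g = 1\<^sub>m m"
    using Bm_inv[OF assms(1)] by blast
  have g: "g \<in> carrier_mat m m" "upper_triangular g" using assms by (auto simp: Bm_def)
  have "det g * det h = 1" using det_mult[OF g(1) h(1)] h(2) by simp
  hence "det g \<noteq> 0" by auto
  hence "0 \<notin> set (diag_mat g)" using upper_triangular_imp_det_eq_0_iff[OF g(1) g(2)] by simp
  thus ?thesis using assms g by (auto simp: diag_mat_def)
qed

lemma ut_mult:
  assumes "A \<in> carrier_mat m m" "B \<in> carrier_mat m m" "upper_triangular A" "upper_triangular B"
  shows "upper_triangular (A * B)"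
proof (rule upper_triangularI)
  fix i j assume ji: "j < i" and i: "i < dim_row (A * B)"
  hence im: "i < m" using assms by simp
  have "(A * B) $$ (i,j) = (\<Sum>l<m. A $$ (i,l) * B $$ (l,j))"
    using mult_entry[OF assms(1,2) im] ji im by simp
  also have "\<dots> = 0"
  proof (rule sum.neutral, intro ballI)
    fix l assume l: "l \<in> {..<m}"
    show "A $$ (i,l) * B $$ (l,j) = 0"
    proof (cases "l < i")
      case True thus ?thesis using upper_triangularD[OF assms(3) True] assms(1) im by simp
    next
      case False thus ?thesis using upper_triangularD[OF assms(4), of j l] assms(2) l ji by simp
    qed
  qed
  finally show "(A * B) $$ (i,j) = 0" .
qed

lemma ut_inv:
  fixes g h :: "'a::field mat"
  assumes g: "g \<in> carrier_mat m m" "upper_triangular g" "\<And>i. i < m \<Longrightarrow> g $$ (i,i) \<noteq> 0"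
    and h: "h \<in> carrier_mat m m" "h * g = 1\<^sub>m m"
  shows "upper_triangular h"
proof (rule upper_triangularI)
  fix i j assume ji: "j < i" and i: "i < dim_row h"
  hence im: "i < m" using h by simp
  show "h $$ (i,j) = 0" using ji
  proof (induction j rule: less_induct)
    case (less j)
    have jm: "j < m" using less im by simp
    have "0 = (h * g) $$ (i,j)" using h less im jm by simp
    also have "\<dots> = (\<Sum>l<m. h $$ (i,l) * g $$ (l,j))" using mult_entry[OF h(1) g(1) im jm] .
    also have "\<dots> = h $$ (i,j) * g $$ (j,j)"
    proof (rule sum_single)
      fix l assume l: "l \<in> {..<m}" "l \<noteq> j"
      show "h $$ (i,l) * g $$ (l,j) = 0"
      proof (cases "l < j")
        case True thus ?thesis using less by auto
      next
        case False thus ?thesis using upper_triangularD[OF g(2), of j l] g(1) l by simp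
      qed
    qed (use jm in auto)
    finally show ?case using g(3)[OF jm] by simp
  qed
qed

lemma mult_cancel3:
  fixes b c d :: "'a::field mat"
  assumes "b \<in> carrier_mat m m" "c \<in> carrier_mat m m" "d \<in> carrier_mat m k" "b * c = 1\<^sub>m m"
  shows "b * (c * d) = d"
proof -
  have "b * (c * d) = (b * c) * d" by (rule assoc_mult_mat[symmetric, OF assms(1-3)])
  thus ?thesis using assms(3,4) by (simp add: left_mult_one_mat)
qed

lemma Bm_intro:
  fixes g h :: "'a::field mat"
  assumes "g \<in> carrier_mat m m" "upper_triangular g" "h \<in> carrier_mat m m"
    "g * h = 1\<^sub>m m" "h * g = 1\<^sub>m m"
  shows "g \<in> Bm m"
  using assms unfolding Bm_def invertible_mat_def inverts_mat_def by auto

lemma one_Bm: "(1\<^sub>m m :: 'a::field mat) \<in> Bm m"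
  by (rule Bm_intro[of _ _ "1\<^sub>m m"]) auto

lemma Bm_mult:
  fixes g1 g2 :: "'a::field mat"
  assumes "g1 \<in> Bm m" "g2 \<in> Bm m"
  shows "g1 * g2 \<in> Bm m"
proof -
  obtain h1 where h1: "h1 \<in> carrier_mat m m" "g1 * h1 = 1\<^sub>m m" "h1 * g1 = 1\<^sub>m m"
    using Bm_inv[OF assms(1)] by blast
  obtain h2 where h2: "h2 \<in> carrier_mat m m" "g2 * h2 = 1\<^sub>m m" "h2 * g2 = 1\<^sub>m m"
    using Bm_inv[OF assms(2)] by blast
  have g: "g1 \<in> carrier_mat m m" "g2 \<in> carrier_mat m m" using assms by (auto simp: Bm_def)
  have 1: "(g1 * g2) * (h2 * h1) = 1\<^sub>m m"
    using g h1 h2 mult_cancel3[of g2 m h2 h1 m] assoc_mult_mat[OF g(1) g(2), of "h2 * h1" m] by simp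
  have 2: "(h2 * h1) * (g1 * g2) = 1\<^sub>m m"
    using g h1 h2 mult_cancel3[of h1 m g1 g2 m] assoc_mult_mat[OF h2(1) h1(1), of "g1 * g2" m] by simp
  show ?thesis
    by (rule Bm_intro[OF _ _ _ 1 2]) (use g h1 h2 assms in \<open>auto intro!: ut_mult simp: Bm_def\<close>)
qed

lemma Bm_inv_Bm:
  fixes g h :: "'a::field mat"
  assumes "g \<in> Bm m" "h \<in> carrier_mat m m" "g * h = 1\<^sub>m m" "h * g = 1\<^sub>m m"
  shows "h \<in> Bm m"
proof -
  have "upper_triangular h"
    using ut_inv[OF Bm_carrier[OF assms(1)] Bm_ut[OF assms(1)] Bm_diag[OF assms(1)] assms(2,4)] .
  thus ?thesis using Bm_intro[OF assms(2) _ Bm_carrier[OF assms(1)] assms(4,3)] by simp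
qed

lemma conj_by_iff:
  fixes g h :: "'a::field mat"
  assumes "g \<in> carrier_mat m m" "h \<in> carrier_mat m m" "g * h = 1\<^sub>m m" "h * g = 1\<^sub>m m"
  shows "conj_by m g X C \<longleftrightarrow> C = g * X * h"
proof
  assume "conj_by m g X C"
  then obtain h' where h': "h' \<in> carrier_mat m m" "g * h' = 1\<^sub>m m" "h' * g = 1\<^sub>m m" "C = g * X * h'"
    unfolding conj_by_def by blast
  have "h * (g * h') = h'" using mult_cancel3[of h m g h' m] h' assms by simp
  hence "h' = h" using h' assms by simp
  thus "C = g * X * h" using h' by simp
next
  assume "C = g * X * h"
  thus "conj_by m g X C" using assms unfolding conj_by_def by blast
qed

lemma conj_by_ex:
  fixes g :: "'a::field mat"
  assumes "g \<in> Bm m"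
  shows "\<exists>D. conj_by m g X D"
  using Bm_inv[OF assms] unfolding conj_by_def by blast

lemma conj_by_unique:
  fixes g :: "'a::field mat"
  assumes "g \<in> Bm m" "conj_by m g X C" "conj_by m g X D"
  shows "C = D"
proof -
  obtain h where h: "h \<in> carrier_mat m m" "g * h = 1\<^sub>m m" "h * g = 1\<^sub>m m"
    using Bm_inv[OF assms(1)] by blast
  show ?thesis using assms(2,3) conj_by_iff[OF Bm_carrier[OF assms(1)] h] by simp
qed

lemma conj_by_one:
  fixes X :: "'a::field mat"
  assumes "X \<in> carrier_mat m m"
  shows "conj_by m (1\<^sub>m m) X X"
  unfolding conj_by_def using assms by (intro bexI[of _ "1\<^sub>m m"]) auto

lemma conj_by_comp:
  fixes g1 g2 X :: "'a::field mat"
  assumes X: "X \<in> carrier_mat m m" and g: "g1 \<in> Bm m" "g2 \<in> Bm m"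
    and c: "conj_by m g2 X Y" "conj_by m g1 Y Z"
  shows "conj_by m (g1 * g2) X Z"
proof -
  obtain h1 where h1: "h1 \<in> carrier_mat m m" "g1 * h1 = 1\<^sub>m m" "h1 * g1 = 1\<^sub>m m"
    using Bm_inv[OF g(1)] by blast
  obtain h2 where h2: "h2 \<in> carrier_mat m m" "g2 * h2 = 1\<^sub>m m" "h2 * g2 = 1\<^sub>m m"
    using Bm_inv[OF g(2)] by blast
  have gc: "g1 \<in> carrier_mat m m" "g2 \<in> carrier_mat m m" using g by (auto simp: Bm_def)
  have Y: "Y = g2 * X * h2" using c(1) conj_by_iff[OF gc(2) h2] by simp
  have Z: "Z = g1 * Y * h1" using c(2) conj_by_iff[OF gc(1) h1] by simp
  have 1: "(g1 * g2) * (h2 * h1) = 1\<^sub>m m"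
    using gc h1 h2 mult_cancel3[of g2 m h2 h1 m] assoc_mult_mat[OF gc(1) gc(2), of "h2 * h1" m] by simp
  have 2: "(h2 * h1) * (g1 * g2) = 1\<^sub>m m"
    using gc h1 h2 mult_cancel3[of h1 m g1 g2 m] assoc_mult_mat[OF h2(1) h1(1), of "g1 * g2" m] by simp
  have "Z = (g1 * g2) * X * (h2 * h1)"
    unfolding Z Y using gc h1 h2 X by (simp add: assoc_mult_mat[of _ m m _ m _ m])
  thus ?thesis unfolding conj_by_def using 1 2 h1 h2
    by (intro bexI[of _ "h2 * h1"]) auto
qed

lemma Nm_carrier: "X \<in> Nm m \<Longrightarrow> X \<in> carrier_mat m m"
  by (simp add: Nm_def)

lemma NmD: "X \<in> Nm m \<Longrightarrow> i < m \<Longrightarrow> j < m \<Longrightarrow> j \<le> i \<Longrightarrow> X $$ (i,j) = 0"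
  by (simp add: Nm_def)

lemma Nm_left:
  fixes g X :: "'a::field mat"
  assumes g: "g \<in> carrier_mat m m" "upper_triangular g" and X: "X \<in> Nm m"
  shows "g * X \<in> Nm m"
proof -
  have Xc: "X \<in> carrier_mat m m" using X by (simp add: Nm_def)
  { fix i j assume ij: "i < m" "j < m" "j \<le> i"
    have "(g * X) $$ (i,j) = (\<Sum>l<m. g $$ (i,l) * X $$ (l,j))" using mult_entry[OF g(1) Xc] ij by simp
    also have "\<dots> = 0"
    proof (rule sum.neutral, intro ballI)
      fix l assume l: "l \<in> {..<m}"
      show "g $$ (i,l) * X $$ (l,j) = 0"
      proof (cases "l < i")
        case True thus ?thesis using upper_triangularD[OF g(2) True] g(1) ij by simp
      next
        case False thus ?thesis using NmD[OF X, of l j] l ij by simp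
      qed
    qed
    finally have "(g * X) $$ (i,j) = 0" . }
  thus ?thesis using g Xc unfolding Nm_def by auto
qed

lemma Nm_right:
  fixes h X :: "'a::field mat"
  assumes h: "h \<in> carrier_mat m m" "upper_triangular h" and X: "X \<in> Nm m"
  shows "X * h \<in> Nm m"
proof -
  have Xc: "X \<in> carrier_mat m m" using X by (simp add: Nm_def)
  { fix i j assume ij: "i < m" "j < m" "j \<le> i"
    have "(X * h) $$ (i,j) = (\<Sum>l<m. X $$ (i,l) * h $$ (l,j))" using mult_entry[OF Xc h(1)] ij by simp
    also have "\<dots> = 0"
    proof (rule sum.neutral, intro ballI)
      fix l assume l: "l \<in> {..<m}"
      show "X $$ (i,l) * h $$ (l,j) = 0"
      proof (cases "l \<le> i")
        case True thus ?thesis using NmD[OF X, of i l] l ij by simp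
      next
        case False thus ?thesis using upper_triangularD[OF h(2), of j l] h(1) l ij by simp
      qed
    qed
    finally have "(X * h) $$ (i,j) = 0" . }
  thus ?thesis using h Xc unfolding Nm_def by auto
qed

lemma conj_Nm:
  fixes g X :: "'a::field mat"
  assumes g: "g \<in> Bm m" and X: "X \<in> Nm m" and c: "conj_by m g X D"
  shows "D \<in> Nm m"
proof -
  obtain h where h: "h \<in> carrier_mat m m" "g * h = 1\<^sub>m m" "h * g = 1\<^sub>m m"
    using Bm_inv[OF g] by blast
  have hB: "h \<in> Bm m" using Bm_inv_Bm[OF g h] .
  have "D = g * X * h" using c conj_by_iff[OF Bm_carrier[OF g] h] by simp
  thus ?thesis using Nm_right[OF h(1) Bm_ut[OF hB] Nm_left[OF Bm_carrier[OF g] Bm_ut[OF g] X]] by simp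
qed

lemma KL:
  fixes g h X Y :: "'a::field mat"
  assumes g: "g \<in> carrier_mat m m" "upper_triangular g"
    and h: "h \<in> carrier_mat m m" "upper_triangular h"
    and X: "X \<in> Nm m" and Y: "Y \<in> Nm m" and ij: "i < m" "j < m"
    and agree: "\<And>a b. a < b \<Longrightarrow> b < m \<Longrightarrow> i \<le> a \<Longrightarrow> (a = i \<longrightarrow> b \<le> j) \<Longrightarrow> X $$ (a,b) = Y $$ (a,b)"
  shows "(g * X * h) $$ (i,j) = (g * Y * h) $$ (i,j)"
proof -
  have Xc: "X \<in> carrier_mat m m" and Yc: "Y \<in> carrier_mat m m" using X Y by (auto simp: Nm_def)
  have row: "(g * X) $$ (i,b) = (g * Y) $$ (i,b)" if b: "b < m" "b \<le> j" for b
  proof -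
    have "(g * X) $$ (i,b) = (\<Sum>l<m. g $$ (i,l) * X $$ (l,b))" using mult_entry[OF g(1) Xc ij(1) b(1)] .
    also have "\<dots> = (\<Sum>l<m. g $$ (i,l) * Y $$ (l,b))"
    proof (rule sum.cong[OF refl])
      fix l assume l: "l \<in> {..<m}"
      show "g $$ (i,l) * X $$ (l,b) = g $$ (i,l) * Y $$ (l,b)"
      proof (cases "l < i")
        case True thus ?thesis using upper_triangularD[OF g(2) True] g(1) ij by simp
      next
        case False
        show ?thesis
        proof (cases "b \<le> l")
          case True thus ?thesis using NmD[OF X, of l b] NmD[OF Y, of l b] l b by simp
        next
          case False2: False
          thus ?thesis using agree[of l b] False l b by simp
        qed
      qed
    qed
    also have "\<dots> = (g * Y) $$ (i,b)" using mult_entry[OF g(1) Yc ij(1) b(1)] by simp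
    finally show ?thesis .
  qed
  have gX: "g * X \<in> carrier_mat m m" "g * Y \<in> carrier_mat m m" using g Xc Yc by auto
  have "(g * X * h) $$ (i,j) = (\<Sum>b<m. (g * X) $$ (i,b) * h $$ (b,j))" using mult_entry[OF gX(1) h(1) ij] .
  also have "\<dots> = (\<Sum>b<m. (g * Y) $$ (i,b) * h $$ (b,j))"
  proof (rule sum.cong[OF refl])
    fix b assume b: "b \<in> {..<m}"
    show "(g * X) $$ (i,b) * h $$ (b,j) = (g * Y) $$ (i,b) * h $$ (b,j)"
    proof (cases "b \<le> j")
      case True thus ?thesis using row b by simp
    next
      case False thus ?thesis using upper_triangularD[OF h(2), of j b] h(1) b by simp
    qed
  qed
  also have "\<dots> = (g * Y * h) $$ (i,j)" using mult_entry[OF gX(2) h(1) ij] by simp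
  finally show ?thesis .
qed

definition prec :: "nat \<times> nat \<Rightarrow> nat \<times> nat \<Rightarrow> bool" where
  "prec x y \<longleftrightarrow> fst y < fst x \<or> (fst x = fst y \<and> snd x < snd y)"

lemma ps_set: "set (belitskii_positions m) = {(i,j). i < j \<and> j < m}"
proof -
  have "\<exists>x\<in>{0..<m}. (a, b) \<in> Pair x ` {Suc x..<m}" if "a < b" "b < m" for a b
    using that by (intro bexI[of _ a]) auto
  thus ?thesis unfolding belitskii_positions_def by auto
qed

lemma ps_sorted_gen:
  "sorted_wrt (>) xs \<Longrightarrow> sorted_wrt prec (concat (map (\<lambda>i. map (\<lambda>j. (i,j)) [Suc i..<m]) xs))"
proof (induction xs)
  case Nil thus ?case by simp
next
  case (Cons x xs)
  have 1: "sorted_wrt prec (map (\<lambda>j. (x,j)) [Suc x..<m])"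
    by (simp add: sorted_wrt_map prec_def sorted_wrt_upt)
  show ?case using Cons 1 by (simp add: sorted_wrt_append) (auto simp: prec_def)
qed

lemma ps_sorted: "sorted_wrt prec (belitskii_positions m)"
  unfolding belitskii_positions_def
  by (rule ps_sorted_gen) (simp add: sorted_wrt_rev sorted_wrt_upt)

lemma ps_nth_prec:
  assumes "k < length (belitskii_positions m)" "t < length (belitskii_positions m)"
  shows "prec (belitskii_positions m ! t) (belitskii_positions m ! k) \<longleftrightarrow> t < k"
proof
  assume "t < k" thus "prec (belitskii_positions m ! t) (belitskii_positions m ! k)"
    using sorted_wrt_nth_less[OF ps_sorted] assms by blast
next
  assume p: "prec (belitskii_positions m ! t) (belitskii_positions m ! k)"
  show "t < k"
  proof (rule ccontr)
    assume "\<not> t < k"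
    hence "t = k \<or> k < t" by auto
    thus False
    proof
      assume "t = k" thus False using p by (auto simp: prec_def)
    next
      assume "k < t"
      hence "prec (belitskii_positions m ! k) (belitskii_positions m ! t)"
        using sorted_wrt_nth_less[OF ps_sorted] assms by blast
      thus False using p by (auto simp: prec_def)
    qed
  qed
qed

lemma ps_mem:
  assumes "a < b" "b < m"
  obtains t where "t < length (belitskii_positions m)" "belitskii_positions m ! t = (a,b)"
proof -
  have "(a,b) \<in> set (belitskii_positions m)" using assms ps_set by auto
  thus ?thesis using that by (auto simp: in_set_conv_nth)
qed

lemma ps_nth:
  assumes "t < length (belitskii_positions m)"
  shows "fst (belitskii_positions m ! t) < snd (belitskii_positions m ! t)"
    "snd (belitskii_positions m ! t) < m"
proof -
  have "belitskii_positions m ! t \<in> set (belitskii_positions m)" using assms by simp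
  thus "fst (belitskii_positions m ! t) < snd (belitskii_positions m ! t)"
    "snd (belitskii_positions m ! t) < m" using ps_set by auto
qed

lemma ag_iff:
  assumes k: "k < length (belitskii_positions m)"
  shows "(\<forall>t<k. D $$ (belitskii_positions m ! t) = X $$ (belitskii_positions m ! t)) \<longleftrightarrow>
    (\<forall>a b. a < b \<and> b < m \<and> prec (a,b) (belitskii_positions m ! k) \<longrightarrow> D $$ (a,b) = X $$ (a,b))"
proof safe
  fix a b assume H: "\<forall>t<k. D $$ (belitskii_positions m ! t) = X $$ (belitskii_positions m ! t)"
    and ab: "a < b" "b < m" "prec (a,b) (belitskii_positions m ! k)"
  obtain t where t: "t < length (belitskii_positions m)" "belitskii_positions m ! t = (a,b)"
    using ps_mem[OF ab(1,2)] .
  have "t < k" using ps_nth_prec[OF k t(1)] t(2) ab(3) by simp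
  thus "D $$ (a,b) = X $$ (a,b)" using H t(2) by metis
next
  fix t assume H: "\<forall>a b. a < b \<and> b < m \<and> prec (a,b) (belitskii_positions m ! k) \<longrightarrow> D $$ (a,b) = X $$ (a,b)"
    and tk: "t < k"
  have t: "t < length (belitskii_positions m)" using tk k by simp
  obtain a b where ab: "belitskii_positions m ! t = (a,b)" by (cases "belitskii_positions m ! t") auto
  have "prec (a,b) (belitskii_positions m ! k)" using ps_nth_prec[OF k t] tk ab by simp
  moreover have "a < b" "b < m" using ps_nth[OF t] ab by auto
  ultimately show "D $$ (belitskii_positions m ! t) = X $$ (belitskii_positions m ! t)" using H ab by simp
qed

definition agr :: "nat \<Rightarrow> nat \<Rightarrow> 'a::field mat \<Rightarrow> 'a mat \<Rightarrow> bool" where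
  "agr m k D X \<longleftrightarrow> (\<forall>t<k. D $$ (belitskii_positions m ! t) = X $$ (belitskii_positions m ! t))"

definition Hk :: "nat \<Rightarrow> nat \<Rightarrow> 'a::field mat \<Rightarrow> 'a mat set" where
  "Hk m k X = {g \<in> Bm m. \<exists>D. conj_by m g X D \<and> agr m k D X}"

definition Gpos :: "nat \<Rightarrow> 'a::field mat \<Rightarrow> nat \<times> nat \<Rightarrow> 'a mat set" where
  "Gpos m X pos = {g \<in> Bm m. \<exists>D. conj_by m g X D \<and>
     (\<forall>a b. a < b \<and> b < m \<and> prec (a,b) pos \<longrightarrow> D $$ (a,b) = X $$ (a,b))}"

definition fixed_ok :: "'a::field set \<Rightarrow> 'a \<Rightarrow> bool" where
  "fixed_ok S l \<longleftrightarrow> (l \<noteq> 0 \<longrightarrow> S \<noteq> UNIV) \<and> (l \<noteq> 0 \<and> l \<noteq> 1 \<longrightarrow> S \<noteq> UNIV - {0})"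

lemma Hk_Gpos:
  "k < length (belitskii_positions m) \<Longrightarrow> Hk m k X = Gpos m X (belitskii_positions m ! k)"
  unfolding Hk_def Gpos_def agr_def using ag_iff by blast

lemma agr_sym: "agr m k D X \<Longrightarrow> agr m k X D"
  by (simp add: agr_def)

lemma agr_trans: "agr m k D X \<Longrightarrow> agr m k X Y \<Longrightarrow> agr m k D Y"
  by (simp add: agr_def)

lemma agr_mono: "agr m l D X \<Longrightarrow> k \<le> l \<Longrightarrow> agr m k D X"
  by (simp add: agr_def)

lemma KL_ag:
  fixes g X Y :: "'a::field mat"
  assumes X: "X \<in> Nm m" and Y: "Y \<in> Nm m" and g: "g \<in> Bm m"
    and cD: "conj_by m g X D" and cE: "conj_by m g Y E"
    and k: "k \<le> length (belitskii_positions m)" and a: "agr m k X Y"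
  shows "agr m k D E"
proof -
  obtain h where h: "h \<in> carrier_mat m m" "g * h = 1\<^sub>m m" "h * g = 1\<^sub>m m"
    using Bm_inv[OF g] by blast
  have hB: "h \<in> Bm m" using Bm_inv_Bm[OF g h] .
  have D: "D = g * X * h" and E: "E = g * Y * h"
    using cD cE conj_by_iff[OF Bm_carrier[OF g] h] by auto
  show ?thesis unfolding agr_def
  proof (intro allI impI)
    fix t assume tk: "t < k"
    have t: "t < length (belitskii_positions m)" using tk k by simp
    obtain i j where ij: "belitskii_positions m ! t = (i,j)" by (cases "belitskii_positions m ! t") auto
    have ijm: "i < j" "j < m" using ps_nth[OF t] ij by auto
    have "(g * X * h) $$ (i,j) = (g * Y * h) $$ (i,j)"
    proof (rule KL[OF Bm_carrier[OF g] Bm_ut[OF g] h(1) Bm_ut[OF hB] X Y])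
      show "i < m" "j < m" using ijm by auto
      fix a b assume ab: "a < b" "b < m" "i \<le> a" "a = i \<longrightarrow> b \<le> j"
      show "X $$ (a,b) = Y $$ (a,b)"
      proof (cases "(a,b) = (i,j)")
        case True thus ?thesis using a tk ij unfolding agr_def by metis
      next
        case False
        obtain t' where t': "t' < length (belitskii_positions m)" "belitskii_positions m ! t' = (a,b)"
          using ps_mem[OF ab(1,2)] .
        have "prec (a,b) (i,j)" using False ab by (auto simp: prec_def)
        hence "t' < t" using ps_nth_prec[OF t t'(1)] t'(2) ij by simp
        thus ?thesis using a tk t'(2) unfolding agr_def by (metis less_trans)
      qed
    qed
    thus "D $$ (belitskii_positions m ! t) = E $$ (belitskii_positions m ! t)" using D E ij by simp
  qed
qed

lemma Hk_sub: "Hk m k X \<subseteq> Bm m"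
  by (auto simp: Hk_def)

lemma Hk_mono: "k \<le> l \<Longrightarrow> Hk m l X \<subseteq> Hk m k X"
  by (auto simp: Hk_def agr_def)

lemma Hk_one: "X \<in> carrier_mat m m \<Longrightarrow> (1\<^sub>m m :: 'a::field mat) \<in> Hk m k X"
  unfolding Hk_def agr_def using one_Bm conj_by_one by blast

lemma Hk_conj_agr:
  fixes g X :: "'a::field mat"
  assumes "g \<in> Hk m k X" "conj_by m g X D"
  shows "agr m k D X"
proof -
  obtain D' where "g \<in> Bm m" "conj_by m g X D'" "agr m k D' X" using assms(1) by (auto simp: Hk_def)
  thus ?thesis using conj_by_unique assms(2) by metis
qed

lemma Hk_cong_sub:
  fixes X Y :: "'a::field mat"
  assumes X: "X \<in> Nm m" and Y: "Y \<in> Nm m" and k: "k \<le> length (belitskii_positions m)"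
    and a: "agr m k X Y"
  shows "Hk m k X \<subseteq> Hk m k Y"
proof
  fix g assume g: "g \<in> Hk m k X"
  then obtain D where D: "g \<in> Bm m" "conj_by m g X D" "agr m k D X" by (auto simp: Hk_def)
  obtain E where E: "conj_by m g Y E" using conj_by_ex[OF D(1)] by blast
  have "agr m k E D" using KL_ag[OF Y X D(1) E D(2) k agr_sym[OF a]] .
  hence "agr m k E Y" using D(3) a by (auto simp: agr_def)
  thus "g \<in> Hk m k Y" using D(1) E by (auto simp: Hk_def)
qed

lemma Hk_cong:
  fixes X Y :: "'a::field mat"
  assumes X: "X \<in> Nm m" and Y: "Y \<in> Nm m" and k: "k \<le> length (belitskii_positions m)"
    and a: "agr m k X Y"
  shows "Hk m k X = Hk m k Y"
  using Hk_cong_sub[OF X Y k a] Hk_cong_sub[OF Y X k agr_sym[OF a]] by blast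

lemma Hk_mult:
  fixes X :: "'a::field mat"
  assumes X: "X \<in> Nm m" and k: "k \<le> length (belitskii_positions m)"
    and g1: "g1 \<in> Hk m k X" and g2: "g2 \<in> Hk m k X"
  shows "g1 * g2 \<in> Hk m k X"
proof -
  obtain D1 where D1: "g1 \<in> Bm m" "conj_by m g1 X D1" "agr m k D1 X" using g1 by (auto simp: Hk_def)
  obtain D2 where D2: "g2 \<in> Bm m" "conj_by m g2 X D2" "agr m k D2 X" using g2 by (auto simp: Hk_def)
  obtain E where E: "conj_by m g1 D2 E" using conj_by_ex[OF D1(1)] by blast
  have D2N: "D2 \<in> Nm m" using conj_Nm[OF D2(1) X D2(2)] .
  have "agr m k E D1" using KL_ag[OF D2N X D1(1) E D1(2) k D2(3)] .
  hence "agr m k E X" using D1(3) by (auto simp: agr_def)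
  moreover have "conj_by m (g1 * g2) X E"
    using conj_by_comp[OF Nm_carrier[OF X] D1(1) D2(1) D2(2) E] .
  moreover have "g1 * g2 \<in> Bm m" using Bm_mult[OF D1(1) D2(1)] .
  ultimately show ?thesis by (auto simp: Hk_def)
qed

lemma orbit_mem:
  assumes "g \<in> G" "conj_by m g X D"
  shows "D $$ pos \<in> orbit_entries m G X pos"
  using assms unfolding orbit_entries_def G_similar_def by blast

lemma lemmaA:
  fixes C :: "'a::field mat"
  assumes C: "C \<in> Nm m"
    and fx: "\<And>i j. i < j \<Longrightarrow> j < m \<Longrightarrow>
       fixed_ok (orbit_entries m (Gpos m C (i,j)) C (i,j)) (C $$ (i,j))"
  shows "belitskii_cf m C"
proof -
  have Cc: "C \<in> carrier_mat m m" using C by (simp add: Nm_def)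
  have H0: "Hk m 0 C = Bm m" using conj_by_ex by (auto simp: Hk_def agr_def)
  have step: "belitskii_step m k C (Hk m k C) C (Hk m (Suc k) C)"
    if k: "k < length (belitskii_positions m)" for k
  proof -
    let ?ps = "belitskii_positions m"
    let ?pos = "?ps ! k"
    let ?S = "orbit_entries m (Hk m k C) C ?pos"
    obtain i j where ij: "?pos = (i,j)" by (cases ?pos) auto
    have ijm: "i < j" "j < m" using ps_nth[OF k] ij by auto
    have fo: "fixed_ok ?S (C $$ ?pos)" using fx[OF ijm] Hk_Gpos[OF k, of C] ij by simp
    have one: "1\<^sub>m m \<in> Hk m k C" using Hk_one[OF Cc] .
    have sim: "G_similar m (Hk m k C) C C" unfolding G_similar_def using one conj_by_one[OF Cc] by blast
    have mem: "C $$ ?pos \<in> ?S" using orbit_mem[OF one conj_by_one[OF Cc]] .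
    have G': "Hk m (Suc k) C = {g \<in> Hk m k C. \<exists>D. conj_by m g C D \<and> (\<forall>t\<le>k. D $$ (?ps ! t) = C $$ (?ps ! t))}"
      unfolding Hk_def agr_def by (auto simp: less_Suc_eq_le)
    have c1: "C $$ ?pos = 0" if "?S = {0} \<or> ?S = UNIV"
      using that mem fo unfolding fixed_ok_def by auto
    have c2: "C $$ ?pos = 1" if "?S = UNIV - {0}"
      using that mem fo unfolding fixed_ok_def by auto
    show ?thesis unfolding belitskii_step_def Let_def
      using c1 c2 sim G' by simp
  qed
  show ?thesis unfolding belitskii_cf_def belitskii_cf_of_def
    using C H0 step by (intro bexI[of _ C] exI[of _ "\<lambda>_. C"] exI[of _ "\<lambda>k. Hk m k C"]) auto
qed

lemma Hk_0: "Hk m 0 (X :: 'a::field mat) = Bm m"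
  using conj_by_ex by (auto simp: Hk_def agr_def)

lemma step_facts:
  fixes X :: "'a::field mat"
  assumes X: "X \<in> Nm m" and k: "k < length (belitskii_positions m)"
    and st: "belitskii_step m k X (Hk m k X) X' G'"
  shows "X' \<in> Nm m" "agr m k X' X" "G' = Hk m (Suc k) X'"
    "X' = X \<or> (\<exists>g \<in> Hk m k X. conj_by m g X X')"
proof -
  let ?ps = "belitskii_positions m"
  have dis: "X' = X \<or> G_similar m (Hk m k X) X X'"
    and G': "G' = {g \<in> Hk m k X. \<exists>C. conj_by m g X' C \<and> (\<forall>t\<le>k. C $$ (?ps ! t) = X' $$ (?ps ! t))}"
    using st unfolding belitskii_step_def Let_def by (auto split: if_splits)
  show d: "X' = X \<or> (\<exists>g \<in> Hk m k X. conj_by m g X X')" using dis unfolding G_similar_def by blast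
  show N: "X' \<in> Nm m" using d X conj_Nm Hk_sub by blast
  show a: "agr m k X' X" using d Hk_conj_agr by (metis agr_def)
  have "G' = Hk m k X \<inter> Hk m (Suc k) X'"
    unfolding G' Hk_def agr_def by (auto simp: less_Suc_eq_le)
  also have "Hk m k X = Hk m k X'" using Hk_cong[OF X N _ agr_sym[OF a]] k by simp
  also have "Hk m k X' \<inter> Hk m (Suc k) X' = Hk m (Suc k) X'" using Hk_mono[of k "Suc k" m X'] by auto
  finally show "G' = Hk m (Suc k) X'" .
qed

lemma lemmaB:
  fixes C :: "'a::field mat"
  assumes cf: "belitskii_cf m C" and k: "k < length (belitskii_positions m)"
  shows "fixed_ok (orbit_entries m (Hk m k C) C (belitskii_positions m ! k)) (C $$ (belitskii_positions m ! k))"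
proof -
  let ?N = "length (belitskii_positions m)"
  let ?ps = "belitskii_positions m"
  obtain A As Gs where A: "A \<in> Nm m" "As 0 = A" "Gs 0 = Bm m"
    and steps: "\<And>k. k < ?N \<Longrightarrow> belitskii_step m k (As k) (Gs k) (As (Suc k)) (Gs (Suc k))"
    and C: "C = As ?N"
    using cf unfolding belitskii_cf_def belitskii_cf_of_def by blast
  have I: "As l \<in> Nm m \<and> Gs l = Hk m l (As l)" if "l \<le> ?N" for l
    using that
  proof (induction l)
    case 0 thus ?case using A Hk_0 by metis
  next
    case (Suc l)
    hence l: "l < ?N" by simp
    have st: "belitskii_step m l (As l) (Hk m l (As l)) (As (Suc l)) (Gs (Suc l))"
      using steps[OF l] Suc by simp
    show ?case using step_facts[OF _ l st] Suc by simp
  qed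
  have R: "\<exists>\<gamma> \<in> Hk m k' (As k'). conj_by m \<gamma> (As k') (As l)"
    if "k' \<le> l" "l \<le> ?N" for k' l
    using that
  proof (induction l)
    case 0
    hence "k' = 0" by simp
    thus ?case using Hk_one[OF Nm_carrier] conj_by_one[OF Nm_carrier] I[of 0] by blast
  next
    case (Suc l)
    show ?case
    proof (cases "k' = Suc l")
      case True thus ?thesis using Hk_one[OF Nm_carrier] conj_by_one[OF Nm_carrier] I[OF Suc.prems(2)] by blast
    next
      case False
      hence kl: "k' \<le> l" "l < ?N" using Suc.prems by auto
      obtain \<gamma> where g: "\<gamma> \<in> Hk m k' (As k')" "conj_by m \<gamma> (As k') (As l)" using Suc.IH kl by auto
      have Nl: "As l \<in> Nm m" and Nk: "As k' \<in> Nm m" using I kl by auto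
      have st: "belitskii_step m l (As l) (Hk m l (As l)) (As (Suc l)) (Gs (Suc l))"
        using steps[OF kl(2)] I[of l] kl by simp
      note sf = step_facts[OF Nl kl(2) st]
      show ?thesis using sf(4)
      proof
        assume "As (Suc l) = As l" thus ?thesis using g by auto
      next
        assume "\<exists>g\<in>Hk m l (As l). conj_by m g (As l) (As (Suc l))"
        then obtain g where g2: "g \<in> Hk m l (As l)" "conj_by m g (As l) (As (Suc l))" by blast
        have ag: "agr m k' (As l) (As k')" using Hk_conj_agr[OF g] .
        have "g \<in> Hk m k' (As l)" using g2(1) Hk_mono[OF kl(1)] by blast
        also have "Hk m k' (As l) = Hk m k' (As k')" using Hk_cong[OF Nl Nk _ ag] kl by simp
        finally have gk: "g \<in> Hk m k' (As k')" .
        have "g * \<gamma> \<in> Hk m k' (As k')" using Hk_mult[OF Nk _ gk g(1)] kl by simp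
        moreover have "conj_by m (g * \<gamma>) (As k') (As (Suc l))"
          using conj_by_comp[OF Nm_carrier[OF Nk] _ _ g(2) g2(2)] gk g(1) Hk_sub by blast
        ultimately show ?thesis by blast
      qed
    qed
  qed
  let ?X = "As k" and ?X' = "As (Suc k)" and ?pos = "?ps ! k"
  have NX: "?X \<in> Nm m" using I k by simp
  have NC: "C \<in> Nm m" using I C by simp
  obtain \<gamma> where g: "\<gamma> \<in> Hk m k ?X" "conj_by m \<gamma> ?X C" using R[of k ?N] k C by auto
  have "agr m k C ?X" using Hk_conj_agr[OF g] .
  hence HC: "Hk m k C = Hk m k ?X" using Hk_cong[OF NC NX] k by simp
  obtain \<gamma>' where g': "\<gamma>' \<in> Hk m (Suc k) ?X'" "conj_by m \<gamma>' ?X' C" using R[of "Suc k" ?N] k C by auto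
  have "agr m (Suc k) C ?X'" using Hk_conj_agr[OF g'] .
  hence Cpos: "C $$ ?pos = ?X' $$ ?pos" by (simp add: agr_def)
  let ?S = "orbit_entries m (Hk m k ?X) ?X ?pos"
  let ?Sc = "orbit_entries m (Hk m k C) C ?pos"
  have sub: "?Sc \<subseteq> ?S"
  proof
    fix x assume "x \<in> ?Sc"
    then obtain g E where gE: "g \<in> Hk m k C" "conj_by m g C E" "x = E $$ ?pos"
      unfolding orbit_entries_def G_similar_def by blast
    have gX: "g \<in> Hk m k ?X" using gE HC by simp
    have "g * \<gamma> \<in> Hk m k ?X" using Hk_mult[OF NX _ gX g(1)] k by simp
    moreover have "conj_by m (g * \<gamma>) ?X E"
      using conj_by_comp[OF Nm_carrier[OF NX] _ _ g(2) gE(2)] gX g(1) Hk_sub by blast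
    ultimately show "x \<in> ?S" using gE(3) orbit_mem by metis
  qed
  have st: "belitskii_step m k ?X (Hk m k ?X) ?X' (Gs (Suc k))" using steps[OF k] I[of k] k by simp
  hence st': "(if ?S = {0} \<or> ?S = UNIV then G_similar m (Hk m k ?X) ?X ?X' \<and> ?X' $$ ?pos = 0
        else if ?S = UNIV - {0} then G_similar m (Hk m k ?X) ?X ?X' \<and> ?X' $$ ?pos = 1
        else ?X' = ?X)"
    unfolding belitskii_step_def Let_def by blast
  have U: "S = UNIV - {0} \<or> S = UNIV" if "UNIV - {0} \<subseteq> S" for S :: "'a set"
    using that by (cases "0 \<in> S") auto
  show ?thesis unfolding HC Cpos
  proof (cases "?S = {0} \<or> ?S = UNIV")
    case True thus "fixed_ok (orbit_entries m (Hk m k ?X) C ?pos) (?X' $$ ?pos)"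
      using st' by (simp add: fixed_ok_def)
  next
    case F1: False
    show "fixed_ok (orbit_entries m (Hk m k ?X) C ?pos) (?X' $$ ?pos)"
    proof (cases "?S = UNIV - {0}")
      case True
      thus ?thesis using st' F1 sub HC unfolding fixed_ok_def by auto
    next
      case False
      hence "?X' = ?X" using st' F1 by simp
      thus ?thesis using F1 False sub HC U unfolding fixed_ok_def by (metis subset_UNIV subset_antisym)
    qed
  qed
qed

lemma lemmaB':
  fixes C :: "'a::field mat"
  assumes cf: "belitskii_cf m C" and ij: "i < j" "j < m"
  shows "fixed_ok (orbit_entries m (Gpos m C (i,j)) C (i,j)) (C $$ (i,j))"
proof -
  obtain t where t: "t < length (belitskii_positions m)" "belitskii_positions m ! t = (i,j)"
    using ps_mem[OF ij] .
  have "Hk m t C = Gpos m C (i,j)" using Hk_Gpos[OF t(1), of C] t(2) by simp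
  thus ?thesis using lemmaB[OF cf t(1)] t(2) by simp
qed

definition blk :: "nat \<Rightarrow> nat \<Rightarrow> 'a mat \<Rightarrow> 'a mat" where
  "blk s r X = mat r r (\<lambda>(a,b). X $$ (s + a, s + b))"

lemma blk_carrier[simp]: "blk s r X \<in> carrier_mat r r"
  by (simp add: blk_def)

lemma blk_dim[simp]: "dim_row (blk s r X) = r" "dim_col (blk s r X) = r"
  by (simp_all add: blk_def)

lemma blk_index[simp]: "a < r \<Longrightarrow> b < r \<Longrightarrow> blk s r X $$ (a,b) = X $$ (s + a, s + b)"
  by (simp add: blk_def)

lemma sum_block:
  fixes f :: "nat \<Rightarrow> 'a::comm_monoid_add"
  assumes "s + r \<le> n" "\<And>b. b < n \<Longrightarrow> b < s \<or> s + r \<le> b \<Longrightarrow> f b = 0"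
  shows "(\<Sum>b<n. f b) = (\<Sum>b<r. f (s + b))"
proof -
  have "(\<Sum>b<n. f b) = (\<Sum>b\<in>{s..<s+r}. f b)"
    by (rule sum.mono_neutral_right) (use assms in auto)
  also have "\<dots> = (\<Sum>b<r. f (s + b))"
    by (induction r) auto
  finally show ?thesis .
qed

lemma blk_mult3:
  fixes g X h :: "'a::field mat"
  assumes g: "g \<in> carrier_mat n n" "upper_triangular g"
    and h: "h \<in> carrier_mat n n" "upper_triangular h"
    and X: "X \<in> Nm n" and s: "s + r \<le> n" and ij: "i < r" "j < r"
  shows "(g * X * h) $$ (s + i, s + j) = (blk s r g * blk s r X * blk s r h) $$ (i,j)"
proof -
  have Xc: "X \<in> carrier_mat n n" using X by (simp add: Nm_def)
  have gX: "g * X \<in> carrier_mat n n" using g Xc by simp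
  have in1: "(g * X) $$ (s + i, b) = 0" if b: "b < n" "b < s" for b
  proof -
    have "(g * X) $$ (s + i, b) = (\<Sum>a<n. g $$ (s + i, a) * X $$ (a, b))"
      using mult_entry[OF g(1) Xc] b s ij by simp
    also have "\<dots> = 0"
    proof (rule sum.neutral, intro ballI)
      fix a assume a: "a \<in> {..<n}"
      show "g $$ (s + i, a) * X $$ (a, b) = 0"
      proof (cases "a < s + i")
        case True thus ?thesis using upper_triangularD[OF g(2) True] g(1) s ij by simp
      next
        case False thus ?thesis using NmD[OF X, of a b] a b by simp
      qed
    qed
    finally show ?thesis .
  qed
  have in2: "(g * X) $$ (s + i, s + b) = (blk s r g * blk s r X) $$ (i, b)" if b: "b < r" for b
  proof -
    have "(g * X) $$ (s + i, s + b) = (\<Sum>a<n. g $$ (s + i, a) * X $$ (a, s + b))"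
      using mult_entry[OF g(1) Xc] b s ij by simp
    also have "\<dots> = (\<Sum>a<r. g $$ (s + i, s + a) * X $$ (s + a, s + b))"
    proof (rule sum_block[OF s])
      fix a assume a: "a < n" "a < s \<or> s + r \<le> a"
      from a(2) show "g $$ (s + i, a) * X $$ (a, s + b) = 0"
      proof
        assume "a < s"
        hence "a < s + i" by simp
        thus ?thesis using upper_triangularD[OF g(2)] g(1) s ij by simp
      next
        assume "s + r \<le> a"
        thus ?thesis using NmD[OF X, of a "s + b"] a b by simp
      qed
    qed
    also have "\<dots> = (\<Sum>l<r. blk s r g $$ (i,l) * blk s r X $$ (l,b))"
      using ij b by (intro sum.cong) auto
    also have "\<dots> = (blk s r g * blk s r X) $$ (i, b)"
      by (rule mult_entry[symmetric]) (use ij b in auto)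
    finally show ?thesis .
  qed
  have "(g * X * h) $$ (s + i, s + j) = (\<Sum>b<n. (g * X) $$ (s + i, b) * h $$ (b, s + j))"
    using mult_entry[OF gX h(1)] s ij by simp
  also have "\<dots> = (\<Sum>b<r. (g * X) $$ (s + i, s + b) * h $$ (s + b, s + j))"
  proof (rule sum_block[OF s])
    fix b assume b: "b < n" "b < s \<or> s + r \<le> b"
    from b(2) show "(g * X) $$ (s + i, b) * h $$ (b, s + j) = 0"
    proof
      assume "b < s" thus ?thesis using in1 b by simp
    next
      assume "s + r \<le> b"
      hence "s + j < b" using ij by simp
      thus ?thesis using upper_triangularD[OF h(2)] h(1) b by simp
    qed
  qed
  also have "\<dots> = (\<Sum>b<r. (blk s r g * blk s r X) $$ (i, b) * blk s r h $$ (b, j))"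
    using in2 ij by (intro sum.cong) auto
  also have "\<dots> = (blk s r g * blk s r X * blk s r h) $$ (i,j)"
    by (rule mult_entry[symmetric]) (use ij in auto)
  finally show ?thesis .
qed

lemma blk_mult2:
  fixes g h :: "'a::field mat"
  assumes g: "g \<in> carrier_mat n n" "upper_triangular g"
    and h: "h \<in> carrier_mat n n" "upper_triangular h"
    and s: "s + r \<le> n" and ij: "i < r" "j < r"
  shows "(g * h) $$ (s + i, s + j) = (blk s r g * blk s r h) $$ (i,j)"
proof -
  have "(g * h) $$ (s + i, s + j) = (\<Sum>b<n. g $$ (s + i, b) * h $$ (b, s + j))"
    using mult_entry[OF g(1) h(1)] s ij by simp
  also have "\<dots> = (\<Sum>b<r. g $$ (s + i, s + b) * h $$ (s + b, s + j))"
  proof (rule sum_block[OF s])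
    fix b assume b: "b < n" "b < s \<or> s + r \<le> b"
    from b(2) show "g $$ (s + i, b) * h $$ (b, s + j) = 0"
    proof
      assume "b < s" hence "b < s + i" by simp
      thus ?thesis using upper_triangularD[OF g(2)] g(1) s ij by simp
    next
      assume "s + r \<le> b"
      hence "s + j < b" using ij by simp
      thus ?thesis using upper_triangularD[OF h(2)] h(1) b by simp
    qed
  qed
  also have "\<dots> = (\<Sum>l<r. blk s r g $$ (i,l) * blk s r h $$ (l,j))"
    using ij by (intro sum.cong) auto
  also have "\<dots> = (blk s r g * blk s r h) $$ (i,j)"
    by (rule mult_entry[symmetric]) (use ij in auto)
  finally show ?thesis .
qed

lemma blk_ut:
  assumes "g \<in> carrier_mat n n" "upper_triangular g" "s + r \<le> n"
  shows "upper_triangular (blk s r g)"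
proof (rule upper_triangularI)
  fix i j assume ij: "j < i" "i < dim_row (blk s r g)"
  hence "i < r" by (simp add: blk_def)
  thus "blk s r g $$ (i,j) = 0" using upper_triangularD[OF assms(2), of "s+j" "s+i"] assms(1,3) ij by simp
qed

lemma blk_inv:
  fixes g h :: "'a::field mat"
  assumes g: "g \<in> carrier_mat n n" "upper_triangular g"
    and h: "h \<in> carrier_mat n n" "upper_triangular h"
    and s: "s + r \<le> n" and gh: "g * h = 1\<^sub>m n"
  shows "blk s r g * blk s r h = 1\<^sub>m r"
proof (rule eq_matI)
  fix i j assume ij: "i < dim_row (1\<^sub>m r)" "j < dim_col (1\<^sub>m r)"
  hence ij': "i < r" "j < r" by auto
  have "(blk s r g * blk s r h) $$ (i,j) = (g * h) $$ (s + i, s + j)"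
    using blk_mult2[OF g h s ij'] by simp
  thus "(blk s r g * blk s r h) $$ (i,j) = 1\<^sub>m r $$ (i,j)" using gh ij' s by simp
qed auto

lemma blk_Bm:
  fixes g h :: "'a::field mat"
  assumes g: "g \<in> Bm n" and h: "h \<in> carrier_mat n n" "g * h = 1\<^sub>m n" "h * g = 1\<^sub>m n"
    and s: "s + r \<le> n"
  shows "blk s r g \<in> Bm r" "blk s r g * blk s r h = 1\<^sub>m r" "blk s r h * blk s r g = 1\<^sub>m r"
proof -
  have hB: "h \<in> Bm n" using Bm_inv_Bm[OF g h] .
  note gg = Bm_carrier[OF g] Bm_ut[OF g] and hh = Bm_carrier[OF hB] Bm_ut[OF hB]
  show 1: "blk s r g * blk s r h = 1\<^sub>m r" using blk_inv[OF gg hh s h(2)] .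
  show 2: "blk s r h * blk s r g = 1\<^sub>m r" using blk_inv[OF hh gg s h(3)] .
  show "blk s r g \<in> Bm r" using Bm_intro[OF blk_carrier blk_ut[OF gg s] blk_carrier 1 2] .
qed

lemma blk_Nm:
  assumes "X \<in> Nm n" "s + r \<le> n"
  shows "blk s r X \<in> Nm r"
  using assms unfolding Nm_def by auto

lemma fixed_ok_mono:
  assumes "S \<subseteq> S1" "fixed_ok S1 l"
  shows "fixed_ok S l"
proof -
  have U: "T = UNIV - {0} \<or> T = UNIV" if "UNIV - {0} \<subseteq> T" for T :: "'a set"
    using that by (cases "0 \<in> T") auto
  show ?thesis using assms U unfolding fixed_ok_def by (metis subset_UNIV subset_antisym)
qed

lemma orbit_block:
  fixes X :: "'a::field mat"
  assumes X: "X \<in> Nm n" and s: "s + r \<le> n" and ij: "i < j" "j < r"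
  shows "orbit_entries n (Gpos n X (s + i, s + j)) X (s + i, s + j)
     \<subseteq> orbit_entries r (Gpos r (blk s r X) (i,j)) (blk s r X) (i,j)"
proof
  fix x assume "x \<in> orbit_entries n (Gpos n X (s + i, s + j)) X (s + i, s + j)"
  then obtain g D where gD: "g \<in> Gpos n X (s + i, s + j)" "conj_by n g X D" "x = D $$ (s + i, s + j)"
    unfolding orbit_entries_def G_similar_def by blast
  obtain D0 where D0: "g \<in> Bm n" "conj_by n g X D0"
    "\<And>a b. a < b \<Longrightarrow> b < n \<Longrightarrow> prec (a,b) (s + i, s + j) \<Longrightarrow> D0 $$ (a,b) = X $$ (a,b)"
    using gD(1) unfolding Gpos_def by blast
  have DD: "D0 = D" using conj_by_unique[OF D0(1) D0(2) gD(2)] .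
  obtain h where h: "h \<in> carrier_mat n n" "g * h = 1\<^sub>m n" "h * g = 1\<^sub>m n"
    using Bm_inv[OF D0(1)] by blast
  have hB: "h \<in> Bm n" using Bm_inv_Bm[OF D0(1) h] .
  have D: "D = g * X * h" using gD(2) conj_by_iff[OF Bm_carrier[OF D0(1)] h] by simp
  note bb = blk_Bm[OF D0(1) h s]
  let ?D' = "blk s r g * blk s r X * blk s r h"
  have c': "conj_by r (blk s r g) (blk s r X) ?D'"
    using conj_by_iff[OF Bm_carrier[OF bb(1)] blk_carrier bb(2,3)] by simp
  have ent: "?D' $$ (a,b) = D $$ (s + a, s + b)" if "a < r" "b < r" for a b
    using blk_mult3[OF Bm_carrier[OF D0(1)] Bm_ut[OF D0(1)] h(1) Bm_ut[OF hB] X s that] D by simp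
  have "blk s r g \<in> Gpos r (blk s r X) (i,j)"
    unfolding Gpos_def
  proof (intro CollectI conjI exI[of _ ?D'] bb(1) c' allI impI)
    fix a b assume ab: "a < b \<and> b < r \<and> prec (a, b) (i, j)"
    have "prec (s + a, s + b) (s + i, s + j)" using ab by (auto simp: prec_def)
    hence "D $$ (s + a, s + b) = X $$ (s + a, s + b)" using D0(3)[of "s + a" "s + b"] ab s DD by simp
    thus "?D' $$ (a,b) = blk s r X $$ (a,b)" using ent ab by simp
  qed
  moreover have "x = ?D' $$ (i,j)" using ent ij gD(3) by simp
  ultimately show "x \<in> orbit_entries r (Gpos r (blk s r X) (i,j)) (blk s r X) (i,j)"
    using orbit_mem c' by metis
qed

lemma subperm_col:
  assumes "subperm Q" "Q \<in> carrier_mat n n" "a < n" "a' < n" "c < n"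
    "Q $$ (a,c) \<noteq> 0" "Q $$ (a',c) \<noteq> 0"
  shows "a = a'"
  using assms unfolding subperm_def by auto

lemma subperm_row:
  assumes "subperm Q" "Q \<in> carrier_mat n k" "a < n" "c < k" "c' < k"
    "Q $$ (a,c) \<noteq> 0" "Q $$ (a,c') \<noteq> 0"
  shows "c = c'"
  using assms unfolding subperm_def by auto

lemma subperm_01:
  assumes "subperm Q" "Q \<in> carrier_mat n k" "a < n" "c < k"
  shows "Q $$ (a,c) = 0 \<or> Q $$ (a,c) = 1"
  using assms unfolding subperm_def by auto

lemma lead:
  fixes M Q g :: "'a::field mat"
  assumes M: "M \<in> Nm n" and Q: "Q \<in> carrier_mat n n" "subperm Q"
    and E1: "\<And>a c. a < n \<Longrightarrow> c < n \<Longrightarrow> Q $$ (a,c) \<noteq> 0 \<Longrightarrow> M $$ (a,c) = 1 \<and> (\<forall>b<c. M $$ (a,b) = 0)"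
    and E2: "\<And>a b. a < n \<Longrightarrow> b < n \<Longrightarrow> (\<forall>c<n. Q $$ (a,c) = 0) \<Longrightarrow> M $$ (a,b) = 0"
    and g: "g \<in> Gpos n M (i,j)" and ij: "i < j" "j < n" and Qij: "Q $$ (i,j) \<noteq> 0"
    and cD: "conj_by n g M D"
  shows "D $$ (i,j) \<noteq> 0"
proof -
  have im: "i < n" using ij by simp
  obtain D0 where D0: "g \<in> Bm n" "conj_by n g M D0"
    "\<And>a b. a < b \<Longrightarrow> b < n \<Longrightarrow> prec (a,b) (i,j) \<Longrightarrow> D0 $$ (a,b) = M $$ (a,b)"
    using g unfolding Gpos_def by blast
  have DD: "D0 = D" using conj_by_unique[OF D0(1) D0(2) cD] .
  have gB: "g \<in> Bm n" using D0(1) .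
  note gc = Bm_carrier[OF gB] and gu = Bm_ut[OF gB]
  obtain h where h: "h \<in> carrier_mat n n" "g * h = 1\<^sub>m n" "h * g = 1\<^sub>m n"
    using Bm_inv[OF gB] by blast
  have Mc: "M \<in> carrier_mat n n" using M by (simp add: Nm_def)
  have D: "D = g * M * h" using cD conj_by_iff[OF gc h] by simp
  have DN: "D \<in> Nm n" using conj_Nm[OF gB M cD] .
  have Dc: "D \<in> carrier_mat n n" using DN by (simp add: Nm_def)
  have Dg: "D * g = g * M"
  proof -
    have "D * g = (g * M) * (h * g)" unfolding D using assoc_mult_mat[of "g * M" n n h n g n] gc Mc h by simp
    thus ?thesis using h gc Mc by simp
  qed
  have Mi: "M $$ (i,j) = 1" "\<And>b. b < j \<Longrightarrow> M $$ (i,b) = 0" using E1[OF im ij(2) Qij] by auto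
  have Drow: "D $$ (i,c) = 0" if c: "c < j" for c
  proof (cases "c \<le> i")
    case True thus ?thesis using NmD[OF DN im, of c] c ij by simp
  next
    case False
    hence "prec (i,c) (i,j)" using c by (simp add: prec_def)
    hence "D $$ (i,c) = M $$ (i,c)" using D0(3)[of i c] False c ij DD by simp
    thus ?thesis using Mi(2)[OF c] by simp
  qed
  have gMz: "(g * M) $$ (i,b) = 0" if b: "b < j" for b
  proof -
    have "(g * M) $$ (i,b) = (D * g) $$ (i,b)" using Dg by simp
    also have "\<dots> = (\<Sum>c<n. D $$ (i,c) * g $$ (c,b))" using mult_entry[OF Dc gc im] b ij by simp
    also have "\<dots> = 0"
    proof (rule sum.neutral, intro ballI)
      fix c assume c: "c \<in> {..<n}"
      show "D $$ (i,c) * g $$ (c,b) = 0"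
      proof (cases "c \<le> b")
        case True thus ?thesis using Drow[of c] b by simp
      next
        case False thus ?thesis using upper_triangularD[OF gu, of b c] gc c by simp
      qed
    qed
    finally show ?thesis .
  qed
  have Dgij: "(D * g) $$ (i,j) = D $$ (i,j) * g $$ (j,j)"
  proof -
    have "(D * g) $$ (i,j) = (\<Sum>c<n. D $$ (i,c) * g $$ (c,j))" using mult_entry[OF Dc gc im ij(2)] .
    also have "\<dots> = D $$ (i,j) * g $$ (j,j)"
    proof (rule sum_single)
      fix c assume c: "c \<in> {..<n}" "c \<noteq> j"
      show "D $$ (i,c) * g $$ (c,j) = 0"
      proof (cases "c < j")
        case True thus ?thesis using Drow by simp
      next
        case False thus ?thesis using upper_triangularD[OF gu, of j c] gc c by simp
      qed
    qed (use ij in auto)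
    finally show ?thesis .
  qed
  define L where "L = {c. c < n \<and> (\<exists>a. i < a \<and> a < n \<and> g $$ (i,a) \<noteq> 0 \<and> Q $$ (a,c) \<noteq> 0)}"
  have Lfin: "finite L" unfolding L_def by simp
  have claim1: "j < c" if c: "c \<in> L" for c
  proof (rule ccontr)
    assume nc: "\<not> j < c"
    have Lne: "L \<noteq> {}" using c by auto
    define c0 where "c0 = Min L"
    have c0L: "c0 \<in> L" unfolding c0_def using Min_in[OF Lfin Lne] .
    have c0le: "c0 \<le> c'" if "c' \<in> L" for c' unfolding c0_def using Min_le[OF Lfin that] .
    have "c0 \<le> j" using c0le[OF c] nc by simp
    obtain a0 where a0: "i < a0" "a0 < n" "g $$ (i,a0) \<noteq> 0" "Q $$ (a0,c0) \<noteq> 0" "c0 < n"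
      using c0L unfolding L_def by blast
    have "c0 \<noteq> j"
    proof
      assume "c0 = j"
      hence "a0 = i" using subperm_col[OF Q(2) Q(1) a0(2) im ij(2)] a0(4) Qij by simp
      thus False using a0(1) by simp
    qed
    hence c0j: "c0 < j" using \<open>c0 \<le> j\<close> by simp
    have "(g * M) $$ (i,c0) = (\<Sum>a<n. g $$ (i,a) * M $$ (a,c0))" using mult_entry[OF gc Mc im a0(5)] .
    also have "\<dots> = g $$ (i,a0) * M $$ (a0,c0)"
    proof (rule sum_single)
      fix a assume a: "a \<in> {..<n}" "a \<noteq> a0"
      show "g $$ (i,a) * M $$ (a,c0) = 0"
      proof (cases "a < i")
        case True thus ?thesis using upper_triangularD[OF gu True] gc im by simp
      next
        case False
        show ?thesis
        proof (cases "a = i")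
          case True thus ?thesis using Mi(2)[OF c0j] by simp
        next
          case False2: False
          hence ai: "i < a" using False by simp
          show ?thesis
          proof (cases "g $$ (i,a) = 0")
            case True thus ?thesis by simp
          next
            case gnz: False
            show ?thesis
            proof (cases "\<forall>c<n. Q $$ (a,c) = 0")
              case True thus ?thesis using E2[of a c0] a a0(5) by simp
            next
              case False
              then obtain c' where c': "c' < n" "Q $$ (a,c') \<noteq> 0" by auto
              have "c' \<in> L" unfolding L_def using c' ai a gnz by auto
              hence "c0 \<le> c'" using c0le by simp
              moreover have "c' \<noteq> c0"
              proof
                assume "c' = c0"
                hence "a = a0" using subperm_col[OF Q(2) Q(1) _ a0(2) a0(5)] a c' a0(4) by simp
                thus False using a by simp
              qed
              ultimately have "c0 < c'" by simp
              thus ?thesis using E1[OF _ c'] a by simp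
            qed
          qed
        qed
      qed
    qed (use a0 in auto)
    also have "\<dots> = g $$ (i,a0)" using E1[OF a0(2) a0(5) a0(4)] by simp
    finally have "(g * M) $$ (i,c0) \<noteq> 0" using a0(3) by simp
    thus False using gMz[OF c0j] by simp
  qed
  have claim2: "(g * M) $$ (i,j) = g $$ (i,i)"
  proof -
    have "(g * M) $$ (i,j) = (\<Sum>a<n. g $$ (i,a) * M $$ (a,j))" using mult_entry[OF gc Mc im ij(2)] .
    also have "\<dots> = g $$ (i,i) * M $$ (i,j)"
    proof (rule sum_single)
      fix a assume a: "a \<in> {..<n}" "a \<noteq> i"
      show "g $$ (i,a) * M $$ (a,j) = 0"
      proof (cases "a < i")
        case True thus ?thesis using upper_triangularD[OF gu True] gc im by simp
      next
        case False
        hence ai: "i < a" using a by simp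
        show ?thesis
        proof (cases "g $$ (i,a) = 0")
          case True thus ?thesis by simp
        next
          case gnz: False
          show ?thesis
          proof (cases "\<forall>c<n. Q $$ (a,c) = 0")
            case True thus ?thesis using E2[of a j] a ij by simp
          next
            case False
            then obtain c' where c': "c' < n" "Q $$ (a,c') \<noteq> 0" by auto
            have "c' \<in> L" unfolding L_def using c' ai a gnz by auto
            hence "j < c'" using claim1 by simp
            thus ?thesis using E1[OF _ c'] a by simp
          qed
        qed
      qed
    qed (use im in auto)
    also have "\<dots> = g $$ (i,i)" using Mi(1) by simp
    finally show ?thesis .
  qed
  have "D $$ (i,j) * g $$ (j,j) = g $$ (i,i)" using Dgij Dg claim2 by simp
  thus ?thesis using Bm_diag[OF gB im] by auto
qed

lemma QU_zero:
  fixes Q U :: "'a::field mat"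
  assumes "Q \<in> carrier_mat m m" "U \<in> carrier_mat m m" "a < m" "b < m" "\<forall>k<m. Q $$ (a,k) = 0"
  shows "(Q * U) $$ (a,b) = 0"
  using mult_entry[OF assms(1-4)] assms(5) by simp

lemma QU_pick:
  fixes Q U :: "'a::field mat"
  assumes "Q \<in> carrier_mat m m" "U \<in> carrier_mat m m" "a < m" "b < m" "c < m"
    "Q $$ (a,c) = 1" "\<forall>k<m. k \<noteq> c \<longrightarrow> Q $$ (a,k) = 0"
  shows "(Q * U) $$ (a,b) = U $$ (c,b)"
proof -
  have "(Q * U) $$ (a,b) = (\<Sum>k<m. Q $$ (a,k) * U $$ (k,b))" using mult_entry[OF assms(1-4)] .
  also have "\<dots> = Q $$ (a,c) * U $$ (c,b)" by (rule sum_single) (use assms in auto)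
  finally show ?thesis using assms(6) by simp
qed

lemma Um_props:
  assumes "U \<in> Um m"
  shows "U \<in> carrier_mat m m" "\<And>i. i < m \<Longrightarrow> U $$ (i,i) = 1"
    "\<And>i j. j < i \<Longrightarrow> i < m \<Longrightarrow> U $$ (i,j) = 0"
  using assms unfolding Um_def by auto

lemma block_echelon:
  fixes Q1 Q2 Q12 U1 U2 :: "'a::field mat"
  assumes Q1: "Q1 \<in> carrier_mat p p" and Q2: "Q2 \<in> carrier_mat q q" and Q12: "Q12 \<in> carrier_mat p q"
    and U1: "U1 \<in> Um p" and U2: "U2 \<in> Um q"
    and sp: "subperm (four_block_mat Q1 Q12 (0\<^sub>m q p) Q2)"
  defines "Qb \<equiv> four_block_mat Q1 Q12 (0\<^sub>m q p) Q2"
    and "M \<equiv> four_block_mat (Q1 * U1) Q12 (0\<^sub>m q p) (Q2 * U2)"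
  shows "\<And>a c. a < p + q \<Longrightarrow> c < p + q \<Longrightarrow> Qb $$ (a,c) \<noteq> 0 \<Longrightarrow>
           M $$ (a,c) = 1 \<and> (\<forall>b<c. M $$ (a,b) = 0)"
    and "\<And>a b. a < p + q \<Longrightarrow> b < p + q \<Longrightarrow> (\<forall>c<p + q. Qb $$ (a,c) = 0) \<Longrightarrow> M $$ (a,b) = 0"
proof -
  have U1c: "U1 \<in> carrier_mat p p" and U2c: "U2 \<in> carrier_mat q q" using Um_props U1 U2 by auto
  have Qbc: "Qb \<in> carrier_mat (p + q) (p + q)" unfolding Qb_def using Q1 Q2 Q12 by auto
  have spQ: "subperm Qb" using sp Qb_def by simp
  have Qe: "Qb $$ (a,c) = (if a < p then if c < p then Q1 $$ (a,c) else Q12 $$ (a, c - p)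
      else if c < p then 0 else Q2 $$ (a - p, c - p))" if "a < p + q" "c < p + q" for a c
    unfolding Qb_def using that Q1 Q2 Q12 by simp
  have Me: "M $$ (a,c) = (if a < p then if c < p then (Q1 * U1) $$ (a,c) else Q12 $$ (a, c - p)
      else if c < p then 0 else (Q2 * U2) $$ (a - p, c - p))" if "a < p + q" "c < p + q" for a c
    unfolding M_def using that Q1 Q2 Q12 U1c U2c by simp
  have row: "c = c'" if "a < p + q" "c < p + q" "c' < p + q" "Qb $$ (a,c) \<noteq> 0" "Qb $$ (a,c') \<noteq> 0" for a c c'
    using subperm_row[OF spQ Qbc that] .
  have one: "Qb $$ (a,c) = 1" if "a < p + q" "c < p + q" "Qb $$ (a,c) \<noteq> 0" for a c
    using subperm_01[OF spQ Qbc that(1,2)] that(3) by auto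
  show "M $$ (a,c) = 1 \<and> (\<forall>b<c. M $$ (a,b) = 0)"
    if ac: "a < p + q" "c < p + q" "Qb $$ (a,c) \<noteq> 0" for a c
  proof (cases "a < p")
    case ap: True
    show ?thesis
    proof (cases "c < p")
      case cp: True
      have q1: "Q1 $$ (a,c) = 1" using one[OF ac] Qe[OF ac(1,2)] ap cp by simp
      have q1z: "\<forall>k<p. k \<noteq> c \<longrightarrow> Q1 $$ (a,k) = 0"
      proof (intro allI impI)
        fix k assume k: "k < p" "k \<noteq> c"
        show "Q1 $$ (a,k) = 0"
        proof (rule ccontr)
          assume "Q1 $$ (a,k) \<noteq> 0"
          hence "Qb $$ (a,k) \<noteq> 0" using Qe[OF ac(1), of k] ap k by simp
          thus False using row[OF ac(1,2), of k] ac(3) k by simp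
        qed
      qed
      have A1: "(Q1 * U1) $$ (a,b) = U1 $$ (c,b)" if "b < p" for b
        using QU_pick[OF Q1 U1c ap that cp q1 q1z] .
      show ?thesis
      proof
        show "M $$ (a,c) = 1" using Me[OF ac(1,2)] ap cp A1[OF cp] Um_props(2)[OF U1 cp] by simp
        show "\<forall>b<c. M $$ (a,b) = 0"
        proof (intro allI impI)
          fix b assume b: "b < c"
          show "M $$ (a,b) = 0" using Me[OF ac(1), of b] b cp ap A1[of b] Um_props(3)[OF U1 b cp] by simp
        qed
      qed
    next
      case cp: False
      have q1z: "\<forall>k<p. Q1 $$ (a,k) = 0"
      proof (intro allI impI)
        fix k assume k: "k < p"
        show "Q1 $$ (a,k) = 0"
        proof (rule ccontr)
          assume "Q1 $$ (a,k) \<noteq> 0"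
          hence "Qb $$ (a,k) \<noteq> 0" using Qe[OF ac(1), of k] ap k by simp
          thus False using row[OF ac(1,2), of k] ac(3) k cp by simp
        qed
      qed
      have A1: "(Q1 * U1) $$ (a,b) = 0" if "b < p" for b
        using QU_zero[OF Q1 U1c ap that q1z] .
      show ?thesis
      proof
        show "M $$ (a,c) = 1" using Me[OF ac(1,2)] one[OF ac] Qe[OF ac(1,2)] ap cp by simp
        show "\<forall>b<c. M $$ (a,b) = 0"
        proof (intro allI impI)
          fix b assume b: "b < c"
          show "M $$ (a,b) = 0"
          proof (cases "b < p")
            case True thus ?thesis using Me[OF ac(1), of b] ap A1 ac by simp
          next
            case False
            have "Qb $$ (a,b) = 0" using row[OF ac(1,2), of b] ac(3) b ac(2) by fastforce
            thus ?thesis using Me[OF ac(1), of b] Qe[OF ac(1), of b] ap False b ac(2) by simp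
          qed
        qed
      qed
    qed
  next
    case ap: False
    have cp: "\<not> c < p" using ac Qe[OF ac(1,2)] ap by (cases "c < p") auto
    let ?a = "a - p" and ?c = "c - p"
    have a': "?a < q" and c': "?c < q" using ac ap cp by auto
    have q2: "Q2 $$ (?a,?c) = 1" using one[OF ac] Qe[OF ac(1,2)] ap cp by simp
    have q2z: "\<forall>k<q. k \<noteq> ?c \<longrightarrow> Q2 $$ (?a,k) = 0"
    proof (intro allI impI)
      fix k assume k: "k < q" "k \<noteq> ?c"
      show "Q2 $$ (?a,k) = 0"
      proof (rule ccontr)
        assume "Q2 $$ (?a,k) \<noteq> 0"
        hence "Qb $$ (a,p + k) \<noteq> 0" using Qe[OF ac(1), of "p + k"] ap k by simp
        hence "c = p + k" using row[OF ac(1,2), of "p + k"] ac(3) k by simp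
        thus False using k by auto
      qed
    qed
    have A2: "(Q2 * U2) $$ (?a,b) = U2 $$ (?c,b)" if "b < q" for b
      using QU_pick[OF Q2 U2c a' that c' q2 q2z] .
    show ?thesis
    proof
      show "M $$ (a,c) = 1" using Me[OF ac(1,2)] ap cp A2[OF c'] Um_props(2)[OF U2 c'] by simp
      show "\<forall>b<c. M $$ (a,b) = 0"
      proof (intro allI impI)
        fix b assume b: "b < c"
        show "M $$ (a,b) = 0"
        proof (cases "b < p")
          case True thus ?thesis using Me[OF ac(1), of b] ap b ac by simp
        next
          case False
          hence "b - p < ?c" using b by simp
          thus ?thesis using Me[OF ac(1), of b] ap False b ac A2[of "b - p"] Um_props(3)[OF U2 _ c'] by simp
        qed
      qed
    qed
  qed
  show "M $$ (a,b) = 0" if ab: "a < p + q" "b < p + q" "\<forall>c<p + q. Qb $$ (a,c) = 0" for a b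
  proof (cases "a < p")
    case ap: True
    have q1z: "\<forall>k<p. Q1 $$ (a,k) = 0" using ab(3) Qe[OF ab(1)] ap by (metis trans_less_add1)
    show ?thesis
    proof (cases "b < p")
      case True thus ?thesis using Me[OF ab(1,2)] ap QU_zero[OF Q1 U1c ap True q1z] by simp
    next
      case False
      have "Qb $$ (a,b) = 0" using ab by simp
      thus ?thesis using Me[OF ab(1,2)] Qe[OF ab(1,2)] ap False by simp
    qed
  next
    case ap: False
    have a': "a - p < q" using ab ap by simp
    have q2z: "\<forall>k<q. Q2 $$ (a - p,k) = 0"
    proof (intro allI impI)
      fix k assume k: "k < q"
      have "Qb $$ (a, p + k) = 0" using ab(3) k by simp
      thus "Q2 $$ (a - p,k) = 0" using Qe[OF ab(1), of "p + k"] ap k by simp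
    qed
    show ?thesis
    proof (cases "b < p")
      case True thus ?thesis using Me[OF ab(1,2)] ap by simp
    next
      case False
      hence "b - p < q" using ab by simp
      thus ?thesis using Me[OF ab(1,2)] ap False QU_zero[OF Q2 U2c a' _ q2z] by simp
    qed
  qed
qed

theorem theorem2p7:
  fixes A1 A2 Q1 Q2 Q12 :: "'a::field mat" and p q :: nat
  assumes "A1 \<in> Nm p" and "A2 \<in> Nm q"
    and "belitskii_cf p A1" and "belitskii_cf q A2"
    and "Q1 \<in> Nm p" and "Q2 \<in> Nm q" and "subperm Q1" and "subperm Q2"
    and "A1 \<in> QU p Q1" and "A2 \<in> QU q Q2"
    and "Q12 \<in> carrier_mat p q"
    and "subperm (four_block_mat Q1 Q12 (0\<^sub>m q p) Q2)"
  shows "belitskii_cf (p + q) (four_block_mat A1 Q12 (0\<^sub>m q p) A2)"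
proof -
  note A1N = assms(1) and A2N = assms(2) and cf1 = assms(3) and cf2 = assms(4)
  note Q12 = assms(11) and sp = assms(12)
  define n where "n = p + q"
  define M where "M = four_block_mat A1 Q12 (0\<^sub>m q p) A2"
  define Qb where "Qb = four_block_mat Q1 Q12 (0\<^sub>m q p) Q2"
  obtain U1 where U1: "U1 \<in> Um p" "A1 = Q1 * U1" using assms(9) unfolding QU_def by blast
  obtain U2 where U2: "U2 \<in> Um q" "A2 = Q2 * U2" using assms(10) unfolding QU_def by blast
  have Q1c: "Q1 \<in> carrier_mat p p" using assms(5) by (simp add: Nm_def)
  have Q2c: "Q2 \<in> carrier_mat q q" using assms(6) by (simp add: Nm_def)
  have A1c: "A1 \<in> carrier_mat p p" using A1N by (simp add: Nm_def)
  have A2c: "A2 \<in> carrier_mat q q" using A2N by (simp add: Nm_def)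
  have Me: "M $$ (a,c) = (if a < p then if c < p then A1 $$ (a,c) else Q12 $$ (a, c - p)
      else if c < p then 0 else A2 $$ (a - p, c - p))" if "a < p + q" "c < p + q" for a c
    unfolding M_def using that A1c A2c Q12 by simp
  have Qe: "Qb $$ (a,c) = (if a < p then if c < p then Q1 $$ (a,c) else Q12 $$ (a, c - p)
      else if c < p then 0 else Q2 $$ (a - p, c - p))" if "a < p + q" "c < p + q" for a c
    unfolding Qb_def using that Q1c Q2c Q12 by simp
  have Mc: "M \<in> carrier_mat n n" unfolding M_def n_def using A1c A2c Q12 by auto
  have Qbc: "Qb \<in> carrier_mat n n" unfolding Qb_def n_def using Q1c Q2c Q12 by auto
  have MN: "M \<in> Nm n"
  proof -
    have "M $$ (i,j) = 0" if ij: "i < n" "j < n" "j \<le> i" for i j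
    proof -
      have ij': "i < p + q" "j < p + q" using ij n_def by auto
      show ?thesis
      proof (cases "i < p")
        case True thus ?thesis using Me[OF ij'] NmD[OF A1N True, of j] ij by auto
      next
        case False thus ?thesis using Me[OF ij'] NmD[OF A2N, of "i - p" "j - p"] ij' ij by auto
      qed
    qed
    thus ?thesis using Mc unfolding Nm_def by auto
  qed
  have E: "\<And>a c. a < p + q \<Longrightarrow> c < p + q \<Longrightarrow> Qb $$ (a,c) \<noteq> 0 \<Longrightarrow>
           M $$ (a,c) = 1 \<and> (\<forall>b<c. M $$ (a,b) = 0)"
    "\<And>a b. a < p + q \<Longrightarrow> b < p + q \<Longrightarrow> (\<forall>c<p + q. Qb $$ (a,c) = 0) \<Longrightarrow> M $$ (a,b) = 0"
    using block_echelon[OF Q1c Q2c Q12 U1(1) U2(1) sp] unfolding M_def Qb_def U1(2) U2(2) by blast+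
  have b1: "blk 0 p M = A1"
    by (rule eq_matI) (use A1c Me in \<open>auto simp: n_def\<close>)
  have b2: "blk p q M = A2"
    by (rule eq_matI) (use A2c Me in \<open>auto simp: n_def\<close>)
  have spQ: "subperm Qb" using sp Qb_def by simp
  have fx: "fixed_ok (orbit_entries n (Gpos n M (i,j)) M (i,j)) (M $$ (i,j))"
    if ij: "i < j" "j < n" for i j
  proof -
    have ij': "i < p + q" "j < p + q" using ij n_def by auto
    show ?thesis
    proof (cases "j < p")
      case True
      have "orbit_entries n (Gpos n M (0 + i, 0 + j)) M (0 + i, 0 + j)
         \<subseteq> orbit_entries p (Gpos p (blk 0 p M) (i,j)) (blk 0 p M) (i,j)"
        by (rule orbit_block[OF MN _ ij(1) True]) (simp add: n_def)
      hence "orbit_entries n (Gpos n M (i,j)) M (i,j) \<subseteq> orbit_entries p (Gpos p A1 (i,j)) A1 (i,j)"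
        using b1 by simp
      moreover have "M $$ (i,j) = A1 $$ (i,j)" using Me[OF ij'] True ij by simp
      ultimately show ?thesis using fixed_ok_mono lemmaB'[OF cf1 ij(1) True] by metis
    next
      case jp: False
      show ?thesis
      proof (cases "p \<le> i")
        case True
        have ij2: "i - p < j - p" "j - p < q" using True ij ij' by auto
        have "orbit_entries n (Gpos n M (p + (i - p), p + (j - p))) M (p + (i - p), p + (j - p))
           \<subseteq> orbit_entries q (Gpos q (blk p q M) (i - p, j - p)) (blk p q M) (i - p, j - p)"
          by (rule orbit_block[OF MN _ ij2]) (simp add: n_def)
        hence "orbit_entries n (Gpos n M (i,j)) M (i,j) \<subseteq> orbit_entries q (Gpos q A2 (i - p, j - p)) A2 (i - p, j - p)"
          using b2 True ij by simp
        moreover have "M $$ (i,j) = A2 $$ (i - p, j - p)" using Me[OF ij'] True ij by simp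
        ultimately show ?thesis using fixed_ok_mono lemmaB'[OF cf2 ij2] by metis
      next
        case False
        have MQ: "M $$ (i,j) = Qb $$ (i,j)" using Me[OF ij'] Qe[OF ij'] False jp by simp
        show ?thesis
        proof (cases "Qb $$ (i,j) = 0")
          case True thus ?thesis using MQ by (simp add: fixed_ok_def)
        next
          case nz: False
          hence "Qb $$ (i,j) = 1" using subperm_01[OF spQ Qbc, of i j] ij by simp
          hence M1: "M $$ (i,j) = 1" using MQ by simp
          have "0 \<notin> orbit_entries n (Gpos n M (i,j)) M (i,j)"
          proof
            assume "0 \<in> orbit_entries n (Gpos n M (i,j)) M (i,j)"
            then obtain g D where gD: "g \<in> Gpos n M (i,j)" "conj_by n g M D" "D $$ (i,j) = 0"
              unfolding orbit_entries_def G_similar_def by auto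
            have "D $$ (i,j) \<noteq> 0"
              by (rule lead[OF MN Qbc spQ _ _ gD(1) ij nz gD(2)]) (use E in \<open>auto simp: n_def\<close>)
            thus False using gD(3) by simp
          qed
          thus ?thesis using M1 by (auto simp: fixed_ok_def)
        qed
      qed
    qed
  qed
  have "belitskii_cf n M" by (rule lemmaA[OF MN fx])
  thus ?thesis unfolding n_def M_def .
qed

end
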